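(* Let $q=2^m$ with $m$ a positive integer. Let $\delta\in\mathbb{F}_{q^2}$, $b\in\mathbb{F}_q^*$, and let $i$ be a non-negative integer with $b\,\mathrm{Tr}_{q^2/q}(\delta)^{2^i+1}=1$. Then the compositional inverse of $$P(x)=b(x^q+x+\delta)^{2^i+q+1}+x$$ over $\mathbb{F}_{q^2}$ is $$P^{-1}(x)=x+b\left(\left(\mathrm{Tr}_{q^2/q}(\delta)(x^q+x)+\delta^{q+1}\right)^{q/2}+\delta\right)^{2^i+q+1}.$$
   Context: $\mathrm{Tr}_{q^2/q}(y)=y+y^q$. The compositional inverse of a permutation polynomial $f$ of $\mathbb{F}_{Q}$ is the unique polynomial $f^{-1}$ (modulo $x^Q-x$) with $f(f^{-1}(c))=f^{-1}(f(c))=c$ for all $c\in\mathbb{F}_Q$; in particular the statement includes that $P$ permutes $\mathbb{F}_{q^2}$. *)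

theory Defs
  imports Main
begin

definition tr_rel :: "nat \<Rightarrow> 'a::field \<Rightarrow> 'a" where
  "tr_rel q y = y + y ^ q"

end

theory Submission imports Defs begin

lemma card_of_nat_zero:
  shows "of_nat (card (UNIV::'a::{field,finite} set)) = (0::'a)"
proof -
  have b: "bij (\<lambda>x::'a. x + 1)"
    by (rule bij_betw_byWitness[where f'="\<lambda>x. x - 1"]) auto
  have "sum (\<lambda>x::'a. x + 1) UNIV = sum id UNIV"
    using sum.reindex_bij_betw[OF b, of id] by simp
  moreover have "sum (\<lambda>x::'a. x + 1) UNIV = sum id UNIV + of_nat (card (UNIV::'a set))"
    by (simp add: sum.distrib)
  ultimately show ?thesis by simp
qed

lemma char2:
  assumes "card (UNIV::'a::{field,finite} set) = 2 ^ n" "n > 0"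
  shows "(1::'a) + 1 = 0"
proof -
  have "(of_nat 2 :: 'a) ^ n = 0" using card_of_nat_zero[where 'a='a] assms(1)
    by (metis of_nat_power)
  hence "(of_nat 2 :: 'a) = 0" by simp
  thus ?thesis by simp
qed

lemma fermat_aux:
  fixes x :: "'a::{field,finite}"
  assumes "x \<noteq> 0"
  shows "x ^ (card (UNIV::'a set) - 1) = 1"
proof -
  let ?S = "UNIV - {0::'a}"
  have b: "bij_betw (\<lambda>y. x * y) ?S ?S"
    apply (rule bij_betw_byWitness[where f'="\<lambda>y. y / x"])
    using assms by auto
  have "prod id ?S = prod (\<lambda>y. x * y) ?S"
    using prod.reindex_bij_betw[OF b, of id] by simp
  also have "\<dots> = x ^ card ?S * prod id ?S"
    by (simp add: prod.distrib)
  finally have "x ^ card ?S = 1"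
    by (metis (no_types, lifting) DiffD2 finite id_apply insertI1 mult_cancel_right1 prod_zero_iff)
  moreover have "card ?S = card (UNIV::'a set) - 1" by (simp add: card_Diff_singleton)
  ultimately show ?thesis by simp
qed

lemma fermat:
  fixes x :: "'a::{field,finite}"
  shows "x ^ card (UNIV::'a set) = x"
proof (cases "x = 0")
  case True
  have "card (UNIV::'a set) > 0" by (simp add: finite_UNIV_card_ge_0)
  then show ?thesis using True by simp
next
  case False
  have "card (UNIV::'a set) > 0" by (simp add: finite_UNIV_card_ge_0)
  then have "x ^ card (UNIV::'a set) = x * x ^ (card (UNIV::'a set) - 1)"
    by (metis Suc_diff_1 power_Suc)
  then show ?thesis using fermat_aux[OF False] by simp
qed

lemma frob:
  fixes x y :: "'a::field"
  assumes "(1::'a) + 1 = 0"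
  shows "(x + y) ^ (2 ^ k) = x ^ (2 ^ k) + y ^ (2 ^ k)"
proof (induction k)
  case 0 then show ?case by simp
next
  case (Suc k)
  have two: "(a + c) ^ 2 = a ^ 2 + c ^ 2" for a c :: 'a
  proof -
    have "(a + c) ^ 2 = a^2 + c^2 + (1+1) * a * c" by (simp add: power2_eq_square algebra_simps)
    then show ?thesis using assms by simp
  qed
  have "(x + y) ^ (2 ^ Suc k) = ((x + y) ^ (2 ^ k)) ^ 2"
    by (metis power_Suc power_commutes power_mult)
  also have "\<dots> = (x ^ (2 ^ k)) ^ 2 + (y ^ (2 ^ k)) ^ 2" using Suc two by simp
  also have "\<dots> = x ^ (2 ^ Suc k) + y ^ (2 ^ Suc k)"
    by (metis power_Suc power_commutes power_mult)
  finally show ?case .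
qed


lemma key_trace:
  fixes b y v :: "'a::field"
  assumes c2: "(1::'a) + 1 = 0" and q: "q = 2 ^ m" and fe: "\<And>x::'a. x ^ (q * q) = x"
    and bq: "b ^ q = b"
  shows "(y + b * v ^ (2 ^ i + q + 1)) ^ q + (y + b * v ^ (2 ^ i + q + 1))
         = b * v ^ (q + 1) * (v ^ q + v) ^ (2 ^ i) + (y ^ q + y)"
proof -
  have fq: "(x + z) ^ q = x ^ q + z ^ q" for x z :: 'a using frob[OF c2] q by simp
  have fi: "(x + z) ^ (2 ^ i) = x ^ (2 ^ i) + z ^ (2 ^ i)" for x z :: 'a using frob[OF c2] by simp
  have e: "v ^ (2 ^ i + q + 1) = v ^ (q + 1) * v ^ (2 ^ i)"
    by (simp add: power_add[symmetric] add.commute)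
  have n: "(v ^ (q + 1)) ^ q = v ^ (q + 1)"
  proof -
    have "(v ^ (q + 1)) ^ q = v ^ (q * q) * v ^ q"
      by (simp add: power_mult[symmetric] power_add[symmetric] algebra_simps)
    also have "\<dots> = v ^ (q + 1)" using fe[of v] by (simp add: mult.commute)
    finally show ?thesis .
  qed
  have v2: "(v ^ (2 ^ i)) ^ q = (v ^ q) ^ (2 ^ i)"
    by (simp add: power_mult[symmetric] mult.commute)
  have "(b * v ^ (2 ^ i + q + 1)) ^ q = b * v ^ (q + 1) * (v ^ q) ^ (2 ^ i)"
    unfolding e using fe[of v] by (simp add: power_mult_distrib bq n v2 power_mult[symmetric] mult.commute)
  then have "(y + b * v ^ (2 ^ i + q + 1)) ^ q + (y + b * v ^ (2 ^ i + q + 1))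
     = (y ^ q + y) + b * v ^ (q + 1) * ((v ^ q) ^ (2 ^ i) + v ^ (2 ^ i))"
    unfolding fq e by (simp add: algebra_simps)
  also have "\<dots> = b * v ^ (q + 1) * (v ^ q + v) ^ (2 ^ i) + (y ^ q + y)"
    by (simp add: fi)
  finally show ?thesis .
qed

lemma sqrt_lem:
  fixes s :: "'a::field"
  assumes "q div 2 * 2 = q"
  shows "(s * s) ^ (q div 2) = s ^ q"
proof -
  have "(s * s) ^ (q div 2) = (s ^ 2) ^ (q div 2)" by (simp add: power2_eq_square)
  also have "\<dots> = s ^ (2 * (q div 2))" by (simp add: power_mult)
  also have "\<dots> = s ^ q" using assms by (simp add: mult.commute)
  finally show ?thesis .
qed

lemma sqrt_lem2:
  fixes a :: "'a::field"
  assumes "q div 2 * 2 = q"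
  shows "a ^ (q div 2) * a ^ (q div 2) = a ^ q"
proof -
  have "a ^ (q div 2) * a ^ (q div 2) = a ^ (q div 2 + q div 2)" by (simp add: power_add)
  also have "q div 2 + q div 2 = q" using assms by simp
  finally show ?thesis .
qed

lemma sqrt_lem3:
  fixes a :: "'a::field"
  shows "(a ^ k) ^ q = (a ^ q) ^ k"
  by (simp add: power_mult[symmetric] mult.commute)

theorem theorem3p7:
  fixes m :: nat and i :: nat and q :: nat
    and \<delta> b :: "'a::{field,finite}"
    and P Pinv :: "'a \<Rightarrow> 'a"
  assumes "m > 0"
    and "q = 2 ^ m"
    and "card (UNIV :: 'a set) = q ^ 2"
    and "b ^ q = b" and "b \<noteq> 0"
    and "b * (tr_rel q \<delta>) ^ (2 ^ i + 1) = 1"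
    and "\<And>x. P x = b * (x ^ q + x + \<delta>) ^ (2 ^ i + q + 1) + x"
    and "\<And>x. Pinv x = x + b * ((tr_rel q \<delta> * (x ^ q + x) + \<delta> ^ (q + 1)) ^ (q div 2) + \<delta>) ^ (2 ^ i + q + 1)"
  shows "bij P \<and> (\<forall>c. P (Pinv c) = c) \<and> (\<forall>c. Pinv (P c) = c)"
proof -
  note q = assms(2)
  have cardq: "card (UNIV :: 'a set) = 2 ^ (2 * m)" using assms(2,3) by (simp add: power_mult[symmetric] mult.commute)
  have c2: "(1::'a) + 1 = 0" using char2[OF cardq] assms(1) by simp
  have aa: "a + a = 0" for a :: 'a
  proof -
    have "a + a = (1 + 1) * a" by (simp add: algebra_simps)
    then show ?thesis using c2 by simp
  qed
  have two: "(2::'a) = 0" using c2 by simp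
  have fe: "x ^ (q * q) = x" for x :: 'a using fermat[of x] assms(3) by (simp add: power2_eq_square)
  have fq: "(x + z) ^ q = x ^ q + z ^ q" for x z :: 'a using frob[OF c2] q by simp
  have qd: "q div 2 * 2 = q" using q assms(1) by (cases m) auto
  define T where "T = \<delta> + \<delta> ^ q"
  define N where "N = \<delta> ^ (q + 1)"
  define e where "e = 2 ^ i + q + 1"
  have trT: "tr_rel q \<delta> = T" unfolding tr_rel_def T_def by simp
  have bT: "b * T ^ (2 ^ i) * T = 1" using assms(6) trT by (simp add: ac_simps)
  have sF: "(x ^ q + x) ^ q = x ^ q + x" for x :: 'a
    unfolding fq using fe[of x] by (simp add: power_mult[symmetric] add.commute)
  have TF: "T ^ q = T" unfolding T_def using sF[of \<delta>] by (simp add: add.commute)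
  have NF: "N ^ q = N"
  proof -
    have "N ^ q = \<delta> ^ (q * q) * \<delta> ^ q" unfolding N_def
      by (simp add: power_mult[symmetric] power_add[symmetric] algebra_simps)
    then show ?thesis using fe[of \<delta>] unfolding N_def by (simp add: mult.commute)
  qed
  have norm: "(s + \<delta>) ^ (q + 1) = s * s + s * T + N" if "s ^ q = s" for s
  proof -
    have "(s + \<delta>) ^ (q + 1) = (s + \<delta> ^ q) * (s + \<delta>)" using that by (simp add: fq)
    also have "\<dots> = s * s + s * T + N" unfolding T_def N_def by (simp add: algebra_simps)
    finally show ?thesis .
  qed
  have trv: "(s + \<delta>) ^ q + (s + \<delta>) = T" if "s ^ q = s" for s
  proof -
    have "(s + \<delta>) ^ q + (s + \<delta>) = (s + s) + T" using that unfolding T_def fq by (simp add: algebra_simps)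
    then show ?thesis using aa by simp
  qed
  have kt: "(y + b * v ^ e) ^ q + (y + b * v ^ e) = b * v ^ (q + 1) * (v ^ q + v) ^ (2 ^ i) + (y ^ q + y)" for y v
    unfolding e_def by (rule key_trace[OF c2 q fe assms(4)])
  have P': "P x = b * (x ^ q + x + \<delta>) ^ e + x" for x using assms(7) e_def by simp
  have Pinv': "Pinv x = x + b * ((T * (x ^ q + x) + N) ^ (q div 2) + \<delta>) ^ e" for x
    using assms(8) trT e_def N_def by simp
  have A: "Pinv (P x) = x" for x
  proof -
    define s where "s = x ^ q + x"
    have sq: "s ^ q = s" unfolding s_def by (rule sF)
    define z where "z = P x"
    have z: "z = x + b * (s + \<delta>) ^ e" unfolding z_def P' s_def by simp
    have "z ^ q + z = b * (s * s + s * T + N) * T ^ (2 ^ i) + s"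
      unfolding z kt trv[OF sq] norm[OF sq] s_def[symmetric] by simp
    then have "T * (z ^ q + z) + N = (b * T ^ (2 ^ i) * T) * (s * s + s * T + N) + T * s + N"
      by (simp add: algebra_simps)
    also have "\<dots> = s * s + (s * T + T * s) + (N + N)" unfolding bT by simp
    also have "\<dots> = s * s" by (simp add: mult.commute[of T s] two)
    finally have "(T * (z ^ q + z) + N) ^ (q div 2) = (s * s) ^ (q div 2)" by simp
    also have "\<dots> = s" using sq by (simp add: sqrt_lem[OF qd])
    finally have "Pinv z = z + b * (s + \<delta>) ^ e" unfolding Pinv' by simp
    also have "\<dots> = x" unfolding z by (simp add: add.assoc two)
    finally show ?thesis unfolding z_def .
  qed
  have B: "P (Pinv c) = c" for c
  proof -
    define sc where "sc = c ^ q + c"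
    have scq: "sc ^ q = sc" unfolding sc_def by (rule sF)
    define a where "a = T * sc + N"
    have aq: "a ^ q = a" unfolding a_def fq by (simp add: power_mult_distrib TF scq NF)
    define r where "r = a ^ (q div 2)"
    have r2: "r * r = a" unfolding r_def using aq by (simp add: sqrt_lem2[OF qd])
    have rq: "r ^ q = r" unfolding r_def using aq by (simp add: sqrt_lem3)
    define z where "z = Pinv c"
    have z: "z = c + b * (r + \<delta>) ^ e" unfolding z_def Pinv' r_def a_def sc_def by simp
    have "z ^ q + z = b * (r + \<delta>) ^ (q + 1) * T ^ (2 ^ i) + sc"
      unfolding z kt trv[OF rq] sc_def[symmetric] by simp
    also have "(r + \<delta>) ^ (q + 1) = T * (sc + r)"
    proof -
      have "(r + \<delta>) ^ (q + 1) = T * sc + r * T + (N + N)" unfolding norm[OF rq] r2 a_def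
        by (simp add: algebra_simps)
      then show ?thesis using aa by (simp add: algebra_simps)
    qed
    also have "b * (T * (sc + r)) * T ^ (2 ^ i) + sc = (b * T ^ (2 ^ i) * T) * (sc + r) + sc"
      by (simp add: algebra_simps)
    also have "\<dots> = r + (sc + sc)" using bT by (simp add: algebra_simps)
    finally have zz: "z ^ q + z = r" using aa by simp
    have "P z = b * (r + \<delta>) ^ e + z" unfolding P' zz ..
    also have "\<dots> = c" unfolding z using aa by (metis add.assoc add.commute add_0)
    finally show ?thesis unfolding z_def .
  qed
  have "bij P" by (rule bij_betw_byWitness[where f'=Pinv]) (simp_all add: A B)
  with A B show ?thesis by blast
qed

end
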